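(* Assume $c_\star>2$. For all $\beta>0$, $\pi_n^\circ(x)=1/|\mathcal V_n^\circ|$ for all $x\in\mathcal V_n^\circ$. Moreover there is an event $\Omega'\subset\Omega$ with $\mathbb P(\Omega')=1$ such that on $\Omega'$, for all but a finite number of indices $n$, $$|\mathcal V_n^\circ|=2^n\Big[1-n^{-2c_\star+1}\big(1+\mathcal O(n^{-(c_\star-1)})\big)\Big].$$
   Context: Let $\mathcal V_n=\{-1,1\}^n$, $\mathcal E_n$ the nearest-neighbour edges. Let $(g(x))_{x\in\mathcal V_n}$, $n\ge1$, be i.i.d. standard Gaussians on $(\Omega,\mathcal F,\mathbb P)$. Given $c_\star>0$, $u_n$ satisfies $\mathbb P(g(x)\le-u_n)=n^{-c_\star}$; $H_n(x)=\sqrt ng(x)$ if $g(x)\le-u_n$, else $0$; $\beta>0$. Call $x$ occupied if $g(x)\le-u_n$; $I_n^\star$ = occupied vertices without occupied neighbours; $\mathcal V_n^\star$ = occupied vertices not in $I_n^\star$; $\mathcal V_n^\circ=\mathcal V_n\setminus\mathcal V_n^\star$. Let $\pi_n(x)=\sum_{y:(x,y)\in\mathcal E_n}e^{-\beta\max(H_n(y),H_n(x))}\big/\sum_{x'\in\mathcal V_n}\sum_{y:(x',y)\in\mathcal E_n}e^{-\beta\max(H_n(y),H_n(x'))}$ (the reversible invariant measure of the Metropolis jump chain $J_n$), and $\pi_n^\circ(x)=\pi_n(x)/\sum_{x'\in\mathcal V_n^\circ}\pi_n(x')$, $x\in\mathcal V_n^\circ$ (the invariant measure of $J_n$ observed at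 its visits to $\mathcal V_n^\circ$). *)

theory Defs
  imports "HOL-Probability.Probability" "HOL-Library.Landau_Symbols"
begin

definition Vn :: "nat \<Rightarrow> int list set" where
  "Vn n = {x. length x = n \<and> set x \<subseteq> {-1, 1}}"

definition adjacent :: "nat \<Rightarrow> int list \<Rightarrow> int list \<Rightarrow> bool" where
  "adjacent n x y \<longleftrightarrow> x \<in> Vn n \<and> y \<in> Vn n \<and> card {i. i < n \<and> x ! i \<noteq> y ! i} = 1"

definition nbrs :: "nat \<Rightarrow> int list \<Rightarrow> int list set" where
  "nbrs n x = {y \<in> Vn n. adjacent n x y}"

text \<open>Unnormalised invariant weight of the Metropolis jump chain for energy h.\<close>
definition jweight :: "real \<Rightarrow> (int list \<Rightarrow> real) \<Rightarrow> nat \<Rightarrow> int list \<Rightarrow> real" where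
  "jweight \<beta> h n x = (\<Sum>y\<in>nbrs n x. exp (- \<beta> * max (h y) (h x)))"

definition pi_n :: "real \<Rightarrow> (int list \<Rightarrow> real) \<Rightarrow> nat \<Rightarrow> int list \<Rightarrow> real" where
  "pi_n \<beta> h n x = jweight \<beta> h n x / (\<Sum>x'\<in>Vn n. jweight \<beta> h n x')"

definition Istar :: "(int list \<Rightarrow> bool) \<Rightarrow> nat \<Rightarrow> int list set" where
  "Istar occ n = {x \<in> Vn n. occ x \<and> (\<forall>y\<in>nbrs n x. \<not> occ y)}"

definition Vstar :: "(int list \<Rightarrow> bool) \<Rightarrow> nat \<Rightarrow> int list set" where
  "Vstar occ n = {x \<in> Vn n. occ x} - Istar occ n"

definition Vcirc :: "(int list \<Rightarrow> bool) \<Rightarrow> nat \<Rightarrow> int list set" where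
  "Vcirc occ n = Vn n - Vstar occ n"

definition pi_circ :: "real \<Rightarrow> (int list \<Rightarrow> real) \<Rightarrow> (int list \<Rightarrow> bool) \<Rightarrow> nat \<Rightarrow> int list \<Rightarrow> real" where
  "pi_circ \<beta> h occ n x = pi_n \<beta> h n x / (\<Sum>x'\<in>Vcirc occ n. pi_n \<beta> h n x')"

definition occupied :: "(nat \<times> int list \<Rightarrow> 'a \<Rightarrow> real) \<Rightarrow> (nat \<Rightarrow> real) \<Rightarrow> nat \<Rightarrow> 'a \<Rightarrow> int list \<Rightarrow> bool" where
  "occupied g u n \<omega> x \<longleftrightarrow> g (n, x) \<omega> \<le> - u n"

definition Hn :: "(nat \<times> int list \<Rightarrow> 'a \<Rightarrow> real) \<Rightarrow> (nat \<Rightarrow> real) \<Rightarrow> nat \<Rightarrow> 'a \<Rightarrow> int list \<Rightarrow> real" where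
  "Hn g u n \<omega> x = (if occupied g u n \<omega> x then sqrt (real n) * g (n, x) \<omega> else 0)"

end

theory Submission
  imports Defs "HOL-Real_Asymp.Real_Asymp"
begin


definition flip :: "int list \<Rightarrow> nat \<Rightarrow> int list" where
  "flip x i = x[i := - (x!i)]"

lemma Vn_nth: "x \<in> Vn n \<Longrightarrow> i < n \<Longrightarrow> x!i = -1 \<or> x!i = 1"
  unfolding Vn_def using nth_mem by fastforce

lemma Vn_finite: "finite (Vn n)"
proof -
  have "Vn n = {xs. set xs \<subseteq> {-1,1} \<and> length xs = n}" unfolding Vn_def by auto
  then show ?thesis using finite_lists_length_eq[of "{-1,1::int}" n] by simp
qed

lemma Vn_card: "card (Vn n) = 2^n"
proof -
  have "Vn n = {xs. set xs \<subseteq> {-1,1} \<and> length xs = n}" unfolding Vn_def by auto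
  then show ?thesis using card_lists_length_eq[of "{-1,1::int}" n] by (simp add: numeral_2_eq_2)
qed

lemma flip_Vn: "x \<in> Vn n \<Longrightarrow> i < n \<Longrightarrow> flip x i \<in> Vn n"
  unfolding flip_def Vn_def using Vn_nth[of x n i] set_update_subset_insert[of x i "-(x!i)"]
  by (auto simp: Vn_def)

lemma flip_diff: "x \<in> Vn n \<Longrightarrow> i < n \<Longrightarrow> {j. j < n \<and> x ! j \<noteq> flip x i ! j} = {i}"
  unfolding flip_def using Vn_nth[of x n i] by (auto simp: Vn_def nth_list_update split: if_splits)

lemma nbrs_eq: assumes "x \<in> Vn n" shows "nbrs n x = flip x ` {..<n}"
proof
  show "flip x ` {..<n} \<subseteq> nbrs n x"
    using assms flip_Vn flip_diff by (auto simp: nbrs_def adjacent_def)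
next
  show "nbrs n x \<subseteq> flip x ` {..<n}"
  proof
    fix y assume y: "y \<in> nbrs n x"
    then have yV: "y \<in> Vn n" and c: "card {i. i < n \<and> x ! i \<noteq> y ! i} = 1"
      by (auto simp: nbrs_def adjacent_def)
    then obtain i where i: "{i. i < n \<and> x ! i \<noteq> y ! i} = {i}" by (metis card_1_singletonE)
    then have "i < n" "x!i \<noteq> y!i" by auto
    have "y = flip x i"
    proof (rule nth_equalityI)
      show "length y = length (flip x i)" using yV assms by (simp add: Vn_def flip_def)
      fix j assume "j < length y"
      then have j: "j < n" using yV by (simp add: Vn_def)
      show "y ! j = flip x i ! j"
      proof (cases "j = i")
        case True
        have "y!i = - (x!i)" using Vn_nth[OF yV \<open>i<n\<close>] Vn_nth[OF assms \<open>i<n\<close>] \<open>x!i \<noteq> y!i\<close> by auto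
        moreover have "i < length x" using assms \<open>i<n\<close> by (simp add: Vn_def)
        ultimately show ?thesis using True by (simp add: flip_def)
      next
        case False
        then have "x!j = y!j" using i j by blast
        then show ?thesis using False by (simp add: flip_def)
      qed
    qed
    then show "y \<in> flip x ` {..<n}" using \<open>i < n\<close> by auto
  qed
qed

lemma flip_inj: assumes "x \<in> Vn n" shows "inj_on (flip x) {..<n}"
proof (rule inj_onI)
  fix i j assume "i \<in> {..<n}" "j \<in> {..<n}" "flip x i = flip x j"
  note h = this
  have a: "{k. k < n \<and> x ! k \<noteq> flip x i ! k} = {i}" using h(1) flip_diff[OF assms] by blast
  have b: "{k. k < n \<and> x ! k \<noteq> flip x j ! k} = {j}" using h(2) flip_diff[OF assms] by blast
  have "{i} = {j}" using a b h(3) by metis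
  then show "i = j" by simp
qed

lemma nbrs_card: "x \<in> Vn n \<Longrightarrow> card (nbrs n x) = n"
  using nbrs_eq card_image flip_inj by (metis card_lessThan)

lemma nbrs_finite: "finite (nbrs n x)"
  using Vn_finite by (auto simp: nbrs_def)

lemma nbrs_sub: "nbrs n x \<subseteq> Vn n" by (auto simp: nbrs_def)

lemma nbrs_not_self: "x \<notin> nbrs n x"
  by (auto simp: nbrs_def adjacent_def)

lemma nbrs_sym: "y \<in> nbrs n x \<Longrightarrow> x \<in> nbrs n y"
proof -
  assume "y \<in> nbrs n x"
  moreover have "{i. i < n \<and> x ! i \<noteq> y ! i} = {i. i < n \<and> y ! i \<noteq> x ! i}" by auto
  ultimately show ?thesis by (auto simp: nbrs_def adjacent_def)
qed



lemma std_normal_half: "measure (density lborel (\<lambda>t. ennreal (std_normal_density t))) {..0} \<ge> 1/2"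
proof -
  define D where "D = density lborel (\<lambda>t. ennreal (std_normal_density t))"
  interpret D: prob_space D unfolding D_def by (rule prob_space_normal_density) simp
  have sp: "space D = UNIV" by (simp add: D_def)
  have sD: "sets D = sets borel" by (simp add: D_def)
  have meas: "(\<lambda>t. ennreal (std_normal_density t)) \<in> borel_measurable lborel" by simp
  have sym: "std_normal_density (- x) = std_normal_density x" for x
    by (simp add: normal_density_def)
  have "emeasure D {..0} = (\<integral>\<^sup>+ x. ennreal (std_normal_density x) * indicator {..0} x \<partial>lborel)"
    unfolding D_def by (rule emeasure_density) auto
  also have "\<dots> = (\<integral>\<^sup>+ x. ennreal (std_normal_density (0 + -1 * x)) * indicator {..0} (0 + -1 * x) \<partial>lborel)"
    using nn_integral_real_affine[of "\<lambda>x. ennreal (std_normal_density x) * indicator {..0} x" "-1" 0] by simp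
  also have "\<dots> = (\<integral>\<^sup>+ x. ennreal (std_normal_density x) * indicator {0..} x \<partial>lborel)"
    by (auto simp: sym intro!: nn_integral_cong split: split_indicator)
  also have "\<dots> = emeasure D {0..}"
    unfolding D_def by (rule emeasure_density[symmetric]) auto
  finally have "emeasure D {..0} = emeasure D {0..}" .
  then have eq: "measure D {..0} = measure D {0..}" by (simp add: measure_def)
  have "1 = measure D ({..0} \<union> {0..})" using D.prob_space sp by (metis atLeast_def atMost_def ivl_disj_un_singleton(1)
      Un_commute atMost_Int_atLeast atLeast_0 UNIV_I subsetI subset_antisym Un_iff linear mem_Collect_eq)
  also have "\<dots> \<le> measure D {..0} + measure D {0..}"
    by (rule measure_subadditive) (auto simp: D_def[symmetric] D.emeasure_finite sD)
  finally show ?thesis using eq unfolding D_def by simp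
qed

lemma jweight_circ:
  assumes n: "n \<ge> 1" and hneg: "\<And>y. occ y \<Longrightarrow> h y \<le> 0" and hz: "\<And>y. \<not> occ y \<Longrightarrow> h y = 0"
    and z: "z \<in> Vcirc occ n"
  shows "jweight \<beta> h n z = real n"
proof -
  have zV: "z \<in> Vn n" and zc: "\<not> occ z \<or> (\<forall>y\<in>nbrs n z. \<not> occ y)"
    using z by (auto simp: Vcirc_def Vstar_def Istar_def)
  have "\<forall>y\<in>nbrs n z. max (h y) (h z) = 0"
  proof
    fix y assume y: "y \<in> nbrs n z"
    show "max (h y) (h z) = 0"
    proof (cases "occ z")
      case True
      then have "\<not> occ y" using zc y by auto
      then show ?thesis using hz[of y] hneg[OF True] by (simp add: max_def)
    next
      case False
      then show ?thesis using hz hneg[of y] hz[of y] by (cases "occ y") (auto simp: max_def)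
    qed
  qed
  then have "jweight \<beta> h n z = (\<Sum>y\<in>nbrs n z. 1)" unfolding jweight_def
    by (intro sum.cong) auto
  also have "\<dots> = real n" using nbrs_card[OF zV] by simp
  finally show ?thesis .
qed

lemma jweight_pos: "n \<ge> 1 \<Longrightarrow> x \<in> Vn n \<Longrightarrow> jweight \<beta> h n x > 0"
  unfolding jweight_def using nbrs_card[of x n] nbrs_finite[of n x]
  by (intro sum_pos) auto

lemma pi_circ_uniform:
  assumes n: "n \<ge> 1" and hneg: "\<And>y. occ y \<Longrightarrow> h y \<le> 0" and hz: "\<And>y. \<not> occ y \<Longrightarrow> h y = 0"
    and x: "x \<in> Vcirc occ n"
  shows "pi_circ \<beta> h occ n x = 1 / real (card (Vcirc occ n))"
proof -
  define Z where "Z = (\<Sum>x'\<in>Vn n. jweight \<beta> h n x')"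
  have VV: "Vn n \<noteq> {}" using x by (auto simp: Vcirc_def)
  have Zp: "Z > 0" unfolding Z_def using jweight_pos[OF n] Vn_finite VV by (intro sum_pos) auto
  have pz: "pi_n \<beta> h n z = real n / Z" if "z \<in> Vcirc occ n" for z
    unfolding pi_n_def Z_def[symmetric] using jweight_circ[OF n hneg hz that] by simp
  have fin: "finite (Vcirc occ n)" using Vn_finite by (auto simp: Vcirc_def)
  have cpos: "card (Vcirc occ n) > 0" using fin x card_gt_0_iff by blast
  have "(\<Sum>x'\<in>Vcirc occ n. pi_n \<beta> h n x') = real (card (Vcirc occ n)) * (real n / Z)"
    using pz by simp
  then have "pi_circ \<beta> h occ n x = (real n / Z) / (real (card (Vcirc occ n)) * (real n / Z))"
    unfolding pi_circ_def using pz[OF x] by simp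
  also have "\<dots> = 1 / real (card (Vcirc occ n))" using Zp n cpos by (simp add: field_simps)
  finally show ?thesis .
qed



locale setting = prob_space M for M :: "'a measure" +
  fixes g :: "nat \<times> int list \<Rightarrow> 'a \<Rightarrow> real" and u :: "nat \<Rightarrow> real" and cs :: real
  assumes ind: "indep_vars (\<lambda>_. borel) g {(n, x). n \<ge> 1 \<and> x \<in> Vn n}"
    and dist: "\<And>n x. n \<ge> 1 \<Longrightarrow> x \<in> Vn n \<Longrightarrow>
           distributed M lborel (g (n, x)) (\<lambda>t. ennreal (std_normal_density t))"
    and tail: "\<And>n. n \<ge> 2 \<Longrightarrow>
           measure (density lborel (\<lambda>t. ennreal (std_normal_density t))) {.. - u n}
             = real n powr (- cs)"
    and cs: "cs > 2"
begin

definition "II = {(n, x). n \<ge> 1 \<and> x \<in> Vn n}"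
definition "p n = real n powr (- cs)"
definition "Oc i \<omega> = (indicator {.. - u (fst i)} (g i \<omega>) :: real)"

lemma p_small: "n \<ge> 2 \<Longrightarrow> p n \<le> 1/4 \<and> p n > 0"
proof -
  assume n: "n \<ge> 2"
  have "real n powr (- cs) \<le> real n powr (-2)" using n cs by (intro powr_mono) auto
  also have "\<dots> = 1 / (real n)^2" using n by (simp add: powr_minus powr_realpow divide_inverse)
  also have "\<dots> \<le> 1/4" using n
  proof -
    have "(2::real)^2 \<le> (real n)^2" using n by (intro power_mono) auto
    then show ?thesis using n by (simp add: field_simps)
  qed
  finally show ?thesis using n unfolding p_def by simp
qed

lemma u_pos: "n \<ge> 2 \<Longrightarrow> u n > 0"
proof (rule ccontr)
  assume n: "n \<ge> 2" and "\<not> u n > 0"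
  define D where "D = density lborel (\<lambda>t. ennreal (std_normal_density t))"
  interpret D: prob_space D unfolding D_def by (rule prob_space_normal_density) simp
  have sD: "sets D = sets borel" by (simp add: D_def)
  have "measure D {..0} \<le> measure D {.. - u n}"
    using \<open>\<not> u n > 0\<close> by (intro D.finite_measure_mono) (auto simp: sD)
  also have "\<dots> = p n" using tail[OF n] unfolding D_def p_def by simp
  finally show False using std_normal_half p_small[OF n] unfolding D_def by simp
qed

lemma rv_g: "i \<in> II \<Longrightarrow> random_variable borel (g i)"
  using ind unfolding indep_vars_def II_def by auto

lemma rv_Oc[measurable]: "i \<in> II \<Longrightarrow> random_variable borel (Oc i)"
  unfolding Oc_def using rv_g by measurable

lemma Oc_01: "Oc i \<omega> = 0 \<or> Oc i \<omega> = 1"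
  unfolding Oc_def by (simp split: split_indicator)

lemma indep_Oc: "indep_vars (\<lambda>_. borel) Oc II"
proof -
  have "indep_vars (\<lambda>_. borel) (\<lambda>i \<omega>. indicator {.. - u (fst i)} (g i \<omega>) :: real) II"
    by (rule indep_vars_compose2[OF ind[folded II_def]]) auto
  then show ?thesis unfolding Oc_def[abs_def] .
qed

lemma E_Oc: assumes "n \<ge> 2" "x \<in> Vn n" shows "expectation (Oc (n, x)) = p n"
proof -
  have d: "distributed M lborel (g (n, x)) (\<lambda>t. ennreal (std_normal_density t))" using dist assms by simp
  have gm: "g (n,x) \<in> measurable M lborel" using d by (rule distributed_measurable)
  have "expectation (Oc (n, x)) = integral\<^sup>L M (\<lambda>\<omega>. indicator {.. - u n} (g (n,x) \<omega>) :: real)"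
    unfolding Oc_def by simp
  also have "\<dots> = integral\<^sup>L (distr M lborel (g (n,x))) (indicator {.. - u n} :: real \<Rightarrow> real)"
    by (rule integral_distr[symmetric]) (use gm in auto)
  also have "\<dots> = integral\<^sup>L (density lborel (\<lambda>t. ennreal (std_normal_density t))) (indicator {.. - u n} :: real \<Rightarrow> real)"
    using distributed_distr_eq_density[OF d] by simp
  also have "\<dots> = measure (density lborel (\<lambda>t. ennreal (std_normal_density t))) {.. - u n}"
    by simp
  also have "\<dots> = p n" using tail assms unfolding p_def by simp
  finally show ?thesis .
qed

lemma Oc_eq: "Oc (n, x) \<omega> = (if occupied g u n \<omega> x then 1 else 0)"
  unfolding Oc_def occupied_def by (simp split: split_indicator)

definition "A n x \<omega> = Oc (n, x) \<omega> * (1 - (\<Prod>y\<in>nbrs n x. (1 - Oc (n, y) \<omega>)))"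
definition "S n \<omega> = (\<Sum>x\<in>Vn n. A n x \<omega>)"
definition "q n = p n * (1 - (1 - p n) ^ n)"

lemma prod_01: "finite F \<Longrightarrow> (\<Prod>y\<in>F. (1 - Oc (n, y) \<omega>)) = (if \<exists>y\<in>F. occupied g u n \<omega> y then 0 else 1)"
  by (induction F rule: finite_induct) (auto simp: Oc_eq)

lemma A_eq: "A n x \<omega> = (if occupied g u n \<omega> x \<and> (\<exists>y\<in>nbrs n x. occupied g u n \<omega> y) then 1 else 0)"
  unfolding A_def using prod_01[of "nbrs n x" n \<omega>, OF nbrs_finite] by (simp add: Oc_eq)

lemma S_card: "S n \<omega> = real (card (Vstar (occupied g u n \<omega>) n))"
proof -
  have "Vstar (occupied g u n \<omega>) n = {x\<in>Vn n. occupied g u n \<omega> x \<and> (\<exists>y\<in>nbrs n x. occupied g u n \<omega> y)}"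
    by (auto simp: Vstar_def Istar_def)
  moreover have "S n \<omega> = (\<Sum>x\<in>Vn n. (if occupied g u n \<omega> x \<and> (\<exists>y\<in>nbrs n x. occupied g u n \<omega> y) then 1 else 0))"
    unfolding S_def A_eq ..
  moreover have "(\<Sum>x\<in>Vn n. (if occupied g u n \<omega> x \<and> (\<exists>y\<in>nbrs n x. occupied g u n \<omega> y) then 1 else 0))
     = (\<Sum>x\<in>{x\<in>Vn n. occupied g u n \<omega> x \<and> (\<exists>y\<in>nbrs n x. occupied g u n \<omega> y)}. (1::real))"
    by (rule sum.inter_filter[symmetric]) (rule Vn_finite)
  ultimately show ?thesis by simp
qed

lemma A_01: "A n x \<omega> = 0 \<or> A n x \<omega> = 1" by (simp add: A_eq)

lemma A_le_Oc: "A n x \<omega> \<le> Oc (n, x) \<omega>" by (simp add: A_eq Oc_eq)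

lemma II_mem: "n \<ge> 1 \<Longrightarrow> x \<in> Vn n \<Longrightarrow> (n, x) \<in> II" by (simp add: II_def)

lemma rv_A[measurable]: assumes "n \<ge> 1" "x \<in> Vn n" shows "random_variable borel (A n x)"
proof -
  have [measurable]: "random_variable borel (Oc (n, y))" if "y \<in> Vn n" for y
    using rv_Oc II_mem assms that by blast
  have m1: "random_variable borel (Oc (n, x))" using rv_Oc II_mem assms by blast
  have m2: "random_variable borel (\<lambda>\<omega>. (\<Prod>y\<in>nbrs n x. (1 - Oc (n, y) \<omega>)))"
    using nbrs_sub[of n x] rv_Oc II_mem assms
    by (intro borel_measurable_prod borel_measurable_diff borel_measurable_const) auto
  show ?thesis unfolding A_def using m1 m2 by measurable
qed

lemma int_A: "n \<ge> 1 \<Longrightarrow> x \<in> Vn n \<Longrightarrow> integrable M (A n x)"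
  by (rule integrable_const_bound[where B=1]) (auto simp: A_eq)

lemma int_Oc: "i \<in> II \<Longrightarrow> integrable M (Oc i)"
  by (rule integrable_const_bound[where B=1]) (auto simp: Oc_def split: split_indicator)

lemma E_1mOc: assumes "n \<ge> 2" "y \<in> Vn n" shows "expectation (\<lambda>\<omega>. 1 - Oc (n, y) \<omega>) = 1 - p n"
proof -
  have "expectation (\<lambda>\<omega>. 1 - Oc (n, y) \<omega>) = expectation (\<lambda>\<omega>. 1) - expectation (Oc (n, y))"
    by (rule Bochner_Integration.integral_diff) (use int_Oc II_mem assms in auto)
  then show ?thesis using E_Oc[OF assms] by (simp add: prob_space)
qed

lemma E_A: assumes n: "n \<ge> 2" and x: "x \<in> Vn n" shows "expectation (A n x) = q n"
proof -
  define N where "N = nbrs n x"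
  define J where "J = insert (n, x) (Pair n ` N)"
  define F where "F = (\<lambda>i \<omega>. if i = (n, x) then Oc i \<omega> else 1 - Oc i \<omega>)"
  have finN: "finite N" unfolding N_def by (rule nbrs_finite)
  have NV: "N \<subseteq> Vn n" unfolding N_def by (rule nbrs_sub)
  have xN: "x \<notin> N" unfolding N_def by (rule nbrs_not_self)
  have JII: "J \<subseteq> II" unfolding J_def using NV x n by (auto simp: II_def)
  have "indep_vars (\<lambda>_. borel) (\<lambda>i \<omega>. (\<lambda>i t. if i = (n, x) then t else 1 - t) i (Oc i \<omega>)) II"
    by (rule indep_vars_compose2[OF indep_Oc]) auto
  then have indF: "indep_vars (\<lambda>_. borel) F J"
    unfolding F_def by (rule indep_vars_subset[OF _ JII])
  have intF: "integrable M (F i)" if "i \<in> J" for i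
  proof -
    have "integrable M (\<lambda>\<omega>. 1 - Oc i \<omega>)"
      using int_Oc[of i] that JII by auto
    then show ?thesis using int_Oc[of i] that JII unfolding F_def by (cases "i = (n,x)") auto
  qed
  have prodF: "(\<Prod>i\<in>J. F i \<omega>) = Oc (n, x) \<omega> * (\<Prod>y\<in>N. (1 - Oc (n, y) \<omega>))" for \<omega>
  proof -
    have "(\<Prod>i\<in>J. F i \<omega>) = F (n, x) \<omega> * (\<Prod>i\<in>Pair n ` N. F i \<omega>)"
      unfolding J_def using finN xN by (subst prod.insert) auto
    also have "(\<Prod>i\<in>Pair n ` N. F i \<omega>) = (\<Prod>y\<in>N. F (n, y) \<omega>)"
      by (subst prod.reindex) (auto simp: inj_on_def)
    also have "\<dots> = (\<Prod>y\<in>N. (1 - Oc (n, y) \<omega>))"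
      using xN by (intro prod.cong) (auto simp: F_def)
    finally show ?thesis by (simp add: F_def)
  qed
  have EprodF: "expectation (\<lambda>\<omega>. \<Prod>i\<in>J. F i \<omega>) = (\<Prod>i\<in>J. expectation (F i))"
    by (rule indep_vars_lebesgue_integral) (use indF intF JII finN in \<open>auto simp: J_def\<close>)
  have "(\<Prod>i\<in>J. expectation (F i)) = expectation (F (n, x)) * (\<Prod>i\<in>Pair n ` N. expectation (F i))"
    unfolding J_def using finN xN by (subst prod.insert) auto
  also have "(\<Prod>i\<in>Pair n ` N. expectation (F i)) = (\<Prod>y\<in>N. expectation (F (n, y)))"
    by (subst prod.reindex) (auto simp: inj_on_def)
  also have "\<dots> = (\<Prod>y\<in>N. 1 - p n)"
  proof (rule prod.cong)
    fix y assume "y \<in> N"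
    then have "F (n, y) = (\<lambda>\<omega>. 1 - Oc (n, y) \<omega>)" using xN by (auto simp: F_def)
    then show "expectation (F (n, y)) = 1 - p n" using E_1mOc[OF n] \<open>y \<in> N\<close> NV by auto
  qed simp
  also have "\<dots> = (1 - p n) ^ n" using nbrs_card[OF x] by (simp add: N_def)
  also have "expectation (F (n, x)) = p n" using E_Oc[OF n x] by (simp add: F_def)
  finally have E2: "expectation (\<lambda>\<omega>. Oc (n, x) \<omega> * (\<Prod>y\<in>N. (1 - Oc (n, y) \<omega>))) = p n * (1 - p n) ^ n"
    using EprodF prodF by simp
  have int2: "integrable M (\<lambda>\<omega>. Oc (n, x) \<omega> * (\<Prod>y\<in>N. (1 - Oc (n, y) \<omega>)))"
    using indep_vars_integrable[OF _ indF intF] finN prodF by (simp add: J_def)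
  have "A n x = (\<lambda>\<omega>. Oc (n, x) \<omega> - Oc (n, x) \<omega> * (\<Prod>y\<in>N. (1 - Oc (n, y) \<omega>)))"
    unfolding A_def N_def by (auto simp: algebra_simps)
  then have "expectation (A n x) = expectation (Oc (n, x)) - expectation (\<lambda>\<omega>. Oc (n, x) \<omega> * (\<Prod>y\<in>N. (1 - Oc (n, y) \<omega>)))"
    using int2 int_Oc II_mem n x by (simp add: Bochner_Integration.integral_diff)
  then show ?thesis using E2 E_Oc[OF n x] by (simp add: q_def algebra_simps)
qed

definition "K n z = Pair n ` insert z (nbrs n z)"
definition "hh n z f = (f (n, z) * (1 - (\<Prod>y\<in>nbrs n z. (1 - f (n, y)))) :: real)"

lemma hh_meas: "hh n z \<in> borel_measurable (PiM (K n z) (\<lambda>_. borel))"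
proof -
  have c: "(\<lambda>f. f i) \<in> borel_measurable (PiM (K n z) (\<lambda>_. borel))" if "i \<in> K n z" for i
    using measurable_component_singleton[OF that, of "\<lambda>_. borel"] by simp
  have "(n, z) \<in> K n z" "\<forall>y\<in>nbrs n z. (n, y) \<in> K n z" by (auto simp: K_def)
  then show ?thesis unfolding hh_def
    by (intro borel_measurable_times borel_measurable_diff borel_measurable_const borel_measurable_prod c) auto
qed

lemma hh_A: "hh n z \<circ> (\<lambda>\<omega>. restrict (\<lambda>i. Oc i \<omega>) (K n z)) = A n z"
  by (auto simp: hh_def A_def K_def fun_eq_iff intro!: prod.cong)

lemma E_AA_far: assumes n: "n \<ge> 2" and x: "x \<in> Vn n" and x': "x' \<in> Vn n"
  and disj: "insert x (nbrs n x) \<inter> insert x' (nbrs n x') = {}"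
  shows "expectation (\<lambda>\<omega>. A n x \<omega> * A n x' \<omega>) = q n * q n"
proof -
  have KK: "K n x \<inter> K n x' = {}" using disj by (auto simp: K_def)
  have KII: "K n z \<subseteq> II" if "z \<in> Vn n" for z
    using that nbrs_sub[of n z] n by (auto simp: K_def II_def)
  have "indep_var (PiM (K n x) (\<lambda>_. borel)) (\<lambda>\<omega>. restrict (\<lambda>i. Oc i \<omega>) (K n x))
                  (PiM (K n x') (\<lambda>_. borel)) (\<lambda>\<omega>. restrict (\<lambda>i. Oc i \<omega>) (K n x'))"
    by (rule indep_var_restrict[OF indep_Oc KK KII[OF x] KII[OF x']])
  then have "indep_var borel (hh n x \<circ> (\<lambda>\<omega>. restrict (\<lambda>i. Oc i \<omega>) (K n x)))
                       borel (hh n x' \<circ> (\<lambda>\<omega>. restrict (\<lambda>i. Oc i \<omega>) (K n x')))"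
    by (rule indep_var_compose) (rule hh_meas)+
  then have iv: "indep_var borel (A n x) borel (A n x')" unfolding hh_A .
  have "expectation (\<lambda>\<omega>. A n x \<omega> * A n x' \<omega>) = expectation (A n x) * expectation (A n x')"
    by (rule indep_var_lebesgue_integral[OF iv]) (use int_A n x x' in auto)
  then show ?thesis using E_A n x x' by simp
qed

definition "R n x = (\<Union>z\<in>insert x (nbrs n x). insert z (nbrs n z))"

lemma R_far: "x' \<notin> R n x \<Longrightarrow> insert x (nbrs n x) \<inter> insert x' (nbrs n x') = {}"
  unfolding R_def using nbrs_sym by blast

lemma card_R: assumes x: "x \<in> Vn n" shows "card (R n x) \<le> (n + 1) * (n + 1)"
proof -
  have "card (R n x) \<le> (\<Sum>z\<in>insert x (nbrs n x). card (insert z (nbrs n z)))"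
    unfolding R_def by (rule card_UN_le) (simp add: nbrs_finite)
  also have "\<dots> = (\<Sum>z\<in>insert x (nbrs n x). n + 1)"
  proof (rule sum.cong[OF refl])
    fix z assume "z \<in> insert x (nbrs n x)"
    then have zV: "z \<in> Vn n" using x nbrs_sub by blast
    show "card (insert z (nbrs n z)) = n + 1"
      using nbrs_card[OF zV] nbrs_finite[of n z] nbrs_not_self[of z n] by simp
  qed
  also have "\<dots> = (n + 1) * (n + 1)"
    using nbrs_card[OF x] nbrs_finite[of n x] nbrs_not_self[of x n] by simp
  finally show ?thesis .
qed

lemma R_finite: "finite (R n x)" unfolding R_def by (simp add: nbrs_finite)

lemma E_S: assumes n: "n \<ge> 2" shows "expectation (S n) = 2 ^ n * q n"
proof -
  have "expectation (S n) = (\<Sum>x\<in>Vn n. expectation (A n x))"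
    unfolding S_def by (rule Bochner_Integration.integral_sum) (use int_A n in auto)
  also have "\<dots> = (\<Sum>x\<in>Vn n. q n)" using E_A n by simp
  finally show ?thesis using Vn_card by simp
qed

lemma rv_S[measurable]: "n \<ge> 1 \<Longrightarrow> random_variable borel (S n)"
  unfolding S_def by (intro borel_measurable_sum) (use rv_A in auto)

lemma S_bnd: "0 \<le> S n \<omega> \<and> S n \<omega> \<le> 2 ^ n"
proof -
  have "card (Vstar (occupied g u n \<omega>) n) \<le> card (Vn n)"
    by (rule card_mono[OF Vn_finite]) (auto simp: Vstar_def)
  then have "real (card (Vstar (occupied g u n \<omega>) n)) \<le> real (2 ^ n)" using Vn_card by (metis of_nat_le_iff)
  then show ?thesis unfolding S_card by simp
qed

lemma int_S2: "n \<ge> 1 \<Longrightarrow> integrable M (\<lambda>\<omega>. (S n \<omega>)^2)"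
proof (rule integrable_const_bound[where B="(2^n)^2"])
  show "AE x in M. norm ((S n x)\<^sup>2) \<le> (2 ^ n)\<^sup>2"
    using S_bnd by (auto intro!: power_mono)
qed simp

lemma int_AA: assumes "n \<ge> 1" "x \<in> Vn n" "x' \<in> Vn n" shows "integrable M (\<lambda>\<omega>. A n x \<omega> * A n x' \<omega>)"
proof (rule integrable_const_bound[where B=1])
  show "AE \<omega> in M. norm (A n x \<omega> * A n x' \<omega>) \<le> 1" by (auto simp: A_eq)
  have "random_variable borel (A n x)" "random_variable borel (A n x')" using rv_A assms by auto
  then show "random_variable borel (\<lambda>\<omega>. A n x \<omega> * A n x' \<omega>)" by measurable
qed

lemma E_DD: assumes n: "n \<ge> 2" and x: "x \<in> Vn n" and x': "x' \<in> Vn n"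
  shows "expectation (\<lambda>\<omega>. (A n x \<omega> - q n) * (A n x' \<omega> - q n)) \<le> (if x' \<in> R n x then p n else 0)"
proof -
  have n1: "n \<ge> 1" using n by simp
  have eq: "(\<lambda>\<omega>. (A n x \<omega> - q n) * (A n x' \<omega> - q n)) =
     (\<lambda>\<omega>. A n x \<omega> * A n x' \<omega> - q n * A n x' \<omega> - q n * A n x \<omega> + q n * q n)"
    by (auto simp: algebra_simps)
  have "expectation (\<lambda>\<omega>. (A n x \<omega> - q n) * (A n x' \<omega> - q n)) =
        expectation (\<lambda>\<omega>. A n x \<omega> * A n x' \<omega>) - q n * expectation (A n x') - q n * expectation (A n x) + q n * q n"
    unfolding eq using int_AA[OF n1 x x'] int_A[OF n1 x] int_A[OF n1 x']
    by (simp add: prob_space)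
  also have "\<dots> = expectation (\<lambda>\<omega>. A n x \<omega> * A n x' \<omega>) - q n * q n"
    using E_A[OF n x] E_A[OF n x'] by simp
  finally have e: "expectation (\<lambda>\<omega>. (A n x \<omega> - q n) * (A n x' \<omega> - q n)) = expectation (\<lambda>\<omega>. A n x \<omega> * A n x' \<omega>) - q n * q n" .
  show ?thesis
  proof (cases "x' \<in> R n x")
    case True
    have "expectation (\<lambda>\<omega>. A n x \<omega> * A n x' \<omega>) \<le> expectation (Oc (n, x))"
    proof (rule integral_mono[OF int_AA[OF n1 x x'] int_Oc[OF II_mem[OF n1 x]]])
      fix \<omega> show "A n x \<omega> * A n x' \<omega> \<le> Oc (n, x) \<omega>"
        using A_le_Oc[of n x \<omega>] A_01[of n x \<omega>] A_01[of n x' \<omega>] by auto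
    qed
    moreover have qq: "0 \<le> q n * q n" by simp
    ultimately have "expectation (\<lambda>\<omega>. A n x \<omega> * A n x' \<omega>) - q n * q n \<le> p n"
      using E_Oc[OF n x] by linarith
    then show ?thesis using True e by simp
  next
    case False
    then show ?thesis using e E_AA_far[OF n x x' R_far[OF False]] by simp
  qed
qed

lemma var_S: assumes n: "n \<ge> 2" shows "variance (S n) \<le> 2 ^ n * (real n + 1)^2 * p n"
proof -
  have n1: "n \<ge> 1" using n by simp
  define D where "D x \<omega> = A n x \<omega> - q n" for x \<omega>
  have intD: "integrable M (\<lambda>\<omega>. D x \<omega> * D x' \<omega>)" if "x \<in> Vn n" "x' \<in> Vn n" for x x'
  proof (rule integrable_const_bound[where B=1])
    have "random_variable borel (A n x)" "random_variable borel (A n x')" using rv_A n1 that by auto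
    then show "random_variable borel (\<lambda>\<omega>. D x \<omega> * D x' \<omega>)" unfolding D_def by measurable
    have q01: "0 \<le> q n" "q n \<le> 1"
    proof -
      have "0 \<le> (1 - p n)^n" "(1 - p n)^n \<le> 1" using p_small[OF n] by (auto intro!: power_le_one)
      then show "0 \<le> q n" "q n \<le> 1" using p_small[OF n] unfolding q_def
        by (auto intro!: mult_nonneg_nonneg mult_le_one)
    qed
    have "\<bar>A n z \<omega> - q n\<bar> \<le> 1" for z \<omega> using A_01[of n z \<omega>] q01 by auto
    then show "AE \<omega> in M. norm (D x \<omega> * D x' \<omega>) \<le> 1" unfolding D_def
      by (auto simp: abs_mult intro!: mult_le_one)
  qed
  have S_eq: "S n \<omega> - expectation (S n) = (\<Sum>x\<in>Vn n. D x \<omega>)" for \<omega>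
    unfolding S_def D_def E_S[OF n, unfolded S_def] using Vn_card by (simp add: sum_subtractf)
  have sq: "(S n \<omega> - expectation (S n))^2 = (\<Sum>x\<in>Vn n. \<Sum>x'\<in>Vn n. D x \<omega> * D x' \<omega>)" for \<omega>
    unfolding S_eq power2_eq_square sum_product ..
  have "variance (S n) = expectation (\<lambda>\<omega>. \<Sum>x\<in>Vn n. \<Sum>x'\<in>Vn n. D x \<omega> * D x' \<omega>)"
    unfolding sq ..
  also have "\<dots> = (\<Sum>x\<in>Vn n. \<Sum>x'\<in>Vn n. expectation (\<lambda>\<omega>. D x \<omega> * D x' \<omega>))"
    using intD by (simp add: Bochner_Integration.integral_sum)
  also have "\<dots> \<le> (\<Sum>x\<in>Vn n. \<Sum>x'\<in>Vn n. (if x' \<in> R n x then p n else 0))"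
    unfolding D_def by (intro sum_mono E_DD[OF n])
  also have "\<dots> \<le> (\<Sum>x\<in>Vn n. (real n + 1)^2 * p n)"
  proof (rule sum_mono)
    fix x assume x: "x \<in> Vn n"
    have "(\<Sum>x'\<in>Vn n. (if x' \<in> R n x then p n else 0)) = (\<Sum>x'\<in>Vn n \<inter> R n x. p n)"
      using Vn_finite by (simp add: sum.If_cases)
    also have "\<dots> = real (card (Vn n \<inter> R n x)) * p n" by simp
    also have "\<dots> \<le> real (card (R n x)) * p n"
      using p_small[OF n] R_finite by (intro mult_right_mono) (auto intro: card_mono)
    also have "\<dots> \<le> (real n + 1)^2 * p n"
    proof -
      have "real (card (R n x)) \<le> real ((n+1)*(n+1))" using card_R[OF x] by linarith
      also have "\<dots> = (real n + 1)^2" by (simp add: power2_eq_square algebra_simps)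
      finally show ?thesis using p_small[OF n] by (intro mult_right_mono) (auto simp: power2_eq_square)
    qed
    finally show "(\<Sum>x'\<in>Vn n. (if x' \<in> R n x then p n else 0)) \<le> (real n + 1)^2 * p n" .
  qed
  also have "\<dots> = 2 ^ n * (real n + 1)^2 * p n" using Vn_card by simp
  finally show ?thesis .
qed

end


lemma pow_upper:
  fixes p :: real assumes "0 \<le> p" "p \<le> 1"
  shows "(1 - p) ^ n \<le> 1 - real n * p + (real n * p)^2 / 2"
proof (induction n)
  case 0 then show ?case by simp
next
  case (Suc n)
  have "(1 - p) ^ Suc n = (1 - p) * (1 - p) ^ n" by simp
  also have "\<dots> \<le> (1 - p) * (1 - real n * p + (real n * p)^2 / 2)"
    using Suc assms by (intro mult_left_mono) auto
  also have "\<dots> = 1 - real (Suc n) * p + (real (Suc n) * p)^2 / 2 - (p^2/2 + (real n)^2 * p^3 / 2)"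
    by (simp add: field_simps power2_eq_square power3_eq_cube)
  also have "\<dots> \<le> 1 - real (Suc n) * p + (real (Suc n) * p)^2 / 2"
  proof -
    have "0 \<le> (real n)^2 * p^3" using assms by simp
    moreover have "0 \<le> p^2" by simp
    ultimately show ?thesis by linarith
  qed
  finally show ?case .
qed

lemma q_approx:
  fixes p :: real assumes "0 \<le> p" "p \<le> 1"
  shows "\<bar>p * (1 - (1 - p) ^ n) - real n * p^2\<bar> \<le> (real n)^2 * p^3 / 2"
proof -
  have l: "1 + real n * (-p) \<le> (1 + (-p)) ^ n" by (rule Bernoulli_inequality) (use assms in simp)
  have u: "(1 - p) ^ n \<le> 1 - real n * p + (real n * p)^2 / 2" by (rule pow_upper[OF assms])
  have "p * (1 - (1 - p) ^ n) - real n * p^2 = - p * ((1 - p)^n - (1 - real n * p))"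
    by (simp add: algebra_simps power2_eq_square)
  moreover have "0 \<le> (1 - p)^n - (1 - real n * p)" "(1 - p)^n - (1 - real n * p) \<le> (real n * p)^2 / 2"
    using l u by auto
  moreover note X = this
  have "p * ((1 - p)^n - (1 - real n * p)) \<le> p * ((real n * p)^2 / 2)"
    using X(2) assms(1) by (rule mult_left_mono)
  moreover have "0 \<le> p * ((1 - p)^n - (1 - real n * p))" using X(1) assms by simp
  ultimately have "\<bar>p * (1 - (1 - p) ^ n) - real n * p^2\<bar> \<le> p * ((real n * p)^2 / 2)"
    by simp
  then show ?thesis by (simp add: power2_eq_square power3_eq_cube algebra_simps)
qed

lemma r_bound:
  fixes Sv Q P N T :: real
  assumes T: "T > 0" and N: "N > 0" and P: "P > 0"
    and h1: "\<bar>Sv - T * Q\<bar> \<le> T * N^2 * P^3" and h2: "\<bar>Q - N * P^2\<bar> \<le> N^2 * P^3 / 2"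
  shows "\<bar>(Sv / T) / (N * P^2) - 1\<bar> \<le> 2 * (N * P)"
proof -
  have D: "T * N * P^2 > 0" using T N P by simp
  have eq: "(Sv / T) / (N * P^2) - 1 = (Sv - T * N * P^2) / (T * N * P^2)"
    using T N P by (simp add: field_simps)
  have "\<bar>Sv - T * N * P^2\<bar> \<le> \<bar>Sv - T * Q\<bar> + T * \<bar>Q - N * P^2\<bar>"
  proof -
    have "Sv - T * N * P^2 = (Sv - T * Q) + T * (Q - N * P^2)" by (simp add: algebra_simps)
    then have "\<bar>Sv - T * N * P^2\<bar> \<le> \<bar>Sv - T * Q\<bar> + \<bar>T * (Q - N * P^2)\<bar>"
      by (metis abs_triangle_ineq)
    then show ?thesis using T by (simp add: abs_mult)
  qed
  also have "\<dots> \<le> T * N^2 * P^3 + T * (N^2 * P^3 / 2)"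
    using h1 h2 T by (intro add_mono mult_left_mono) auto
  also have "\<dots> \<le> 2 * (N * P) * (T * N * P^2)"
    using T N P by (simp add: power2_eq_square power3_eq_cube algebra_simps)
  finally have "\<bar>Sv - T * N * P^2\<bar> \<le> 2 * (N * P) * (T * N * P^2)" .
  then show ?thesis unfolding eq by (simp only: abs_divide abs_of_pos[OF D] pos_divide_le_eq[OF D])
qed

context setting begin

definition "aa n = 2 ^ n * (real n)^2 * p n ^ 3"
definition "Bad n = (if n \<ge> 2 then {\<omega>\<in>space M. aa n \<le> \<bar>S n \<omega> - expectation (S n)\<bar>} else {})"

lemma Bad_sets[measurable]: "Bad n \<in> sets M"
  unfolding Bad_def using rv_S[of n] by (auto simp del: Collect_conj_eq)

lemma p_pow5: "n \<ge> 2 \<Longrightarrow> 1 / p n ^ 5 = real n powr (5 * cs)"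
proof -
  assume n: "n \<ge> 2"
  have "p n ^ 5 = real n powr (real 5 * (- cs))" unfolding p_def using n by (subst powr_power) auto
  then have "1 / p n ^ 5 = inverse (real n powr (- (5 * cs)))" by (simp add: divide_inverse)
  also have "\<dots> = real n powr (5 * cs)" by (simp add: powr_minus)
  finally show ?thesis .
qed

lemma Bad_bound: assumes n: "n \<ge> 2" shows "measure M (Bad n) \<le> real n powr (5 * cs) / 2 ^ n"
proof -
  have n1: "n \<ge> 1" using n by simp
  have P: "p n > 0" "p n \<le> 1/4" using p_small[OF n] by auto
  have apos: "aa n > 0" unfolding aa_def using P n by simp
  have "measure M (Bad n) = prob {\<omega>\<in>space M. \<bar>S n \<omega> - expectation (S n)\<bar> \<ge> aa n}"
    using n by (simp add: Bad_def)
  also have "\<dots> \<le> variance (S n) / (aa n)^2"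
    by (rule Chebyshev_inequality[OF rv_S[OF n1] int_S2[OF n1] apos])
  also have "\<dots> \<le> (2 ^ n * (real n + 1)^2 * p n) / (aa n)^2"
    using var_S[OF n] apos by (intro divide_right_mono) auto
  also have "\<dots> = ((real n + 1)^2 / (real n)^4) * (1 / p n ^ 5) / 2 ^ n"
    unfolding aa_def using P n by (simp add: field_simps eval_nat_numeral)
  also have "\<dots> \<le> 1 * (1 / p n ^ 5) / 2 ^ n"
  proof -
    have "(real n + 1)^2 \<le> (real n)^4"
    proof -
      have n2: "2 \<le> real n" using n by simp
      then have "real n * 2 \<le> real n * real n" by (intro mult_left_mono) auto
      then have "real n + 1 \<le> real n * real n" using n2 by linarith
      then have "(real n + 1) \<le> (real n)^2" by (simp add: power2_eq_square)
      then have "(real n + 1)^2 \<le> ((real n)^2)^2" by (intro power_mono) auto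
      then show ?thesis by simp
    qed
    then have "(real n + 1)^2 / (real n)^4 \<le> 1" using n by simp
    then show ?thesis using P by (intro divide_right_mono mult_right_mono) auto
  qed
  also have "\<dots> = real n powr (5 * cs) / 2 ^ n" using p_pow5[OF n] by simp
  finally show ?thesis .
qed

lemma Bad_summable: "summable (\<lambda>n. measure M (Bad n))"
proof -
  have s1: "summable (\<lambda>n. norm (real n powr (-2)))"
    using summable_real_powr_iff[of "-2"] by simp
  have "(\<lambda>n::nat. real n powr (5 * cs) / 2^n) \<in> O(\<lambda>n. real n powr -2)" by real_asymp
  then have s2: "summable (\<lambda>n::nat. real n powr (5 * cs) / 2^n)"
    by (rule summable_comparison_test_bigo[OF s1])
  show ?thesis
    by (rule summable_comparison_test'[OF s2, where N=2]) (use Bad_bound in auto)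
qed

lemma powr_facts: assumes n: "n \<ge> 1"
  shows "real n powr (-2*cs+1) = real n * p n ^ 2" and "real n powr (-(cs-1)) = real n * p n"
proof -
  have e1: "-2*cs+1 = 1 + real 2 * (-cs)" by simp
  have "p n ^ 2 = real n powr (real 2 * (- cs))" unfolding p_def using n by (subst powr_power) auto
  then show "real n powr (-2*cs+1) = real n * p n ^ 2"
    unfolding e1 by (simp add: powr_mult_base)
  have e2: "-(cs-1) = 1 + (-cs)" by simp
  show "real n powr (-(cs-1)) = real n * p n" unfolding e2 p_def by (simp add: powr_mult_base)
qed

lemma card_Vcirc: "real (card (Vcirc (occupied g u n \<omega>) n)) = 2 ^ n - S n \<omega>"
proof -
  have sub: "Vstar (occupied g u n \<omega>) n \<subseteq> Vn n" by (auto simp: Vstar_def)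
  have "card (Vcirc (occupied g u n \<omega>) n) = card (Vn n) - card (Vstar (occupied g u n \<omega>) n)"
    unfolding Vcirc_def by (rule card_Diff_subset[OF finite_subset[OF sub Vn_finite] sub])
  moreover have "card (Vstar (occupied g u n \<omega>) n) \<le> card (Vn n)" by (rule card_mono[OF Vn_finite sub])
  ultimately show ?thesis using Vn_card S_card by (simp add: of_nat_diff)
qed

lemma main2: "\<exists>\<Omega>'\<in>sets M. measure M \<Omega>' = 1 \<and>
            (\<forall>\<omega>\<in>\<Omega>'. \<exists>r :: nat \<Rightarrow> real.
               r \<in> O(\<lambda>n. real n powr (- (cs - 1))) \<and>
               (\<forall>\<^sub>F n in sequentially.
                  real (card (Vcirc (occupied g u n \<omega>) n))
                    = 2 ^ n * (1 - real n powr (- 2 * cs + 1) * (1 + r n))))"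
proof -
  have "AE \<omega> in M. eventually (\<lambda>n. \<omega> \<in> space M - Bad n) sequentially"
    by (rule borel_cantelli_AE1) (auto simp: Bad_summable less_top[symmetric])
  then obtain N where N: "\<And>\<omega>. \<omega> \<in> space M - N \<Longrightarrow> eventually (\<lambda>n. \<omega> \<in> space M - Bad n) sequentially"
    and Nnull: "N \<in> null_sets M" by (rule AE_E3) blast
  have Ns: "N \<in> sets M" using Nnull by auto
  have N0: "measure M N = 0" using Nnull by (simp add: measure_def null_setsD1)
  have meas1: "measure M (space M - N) = 1"
    using finite_measure_compl[OF Ns] N0 prob_space by simp
  have good: "\<exists>r :: nat \<Rightarrow> real.
               r \<in> O(\<lambda>n. real n powr (- (cs - 1))) \<and>
               (\<forall>\<^sub>F n in sequentially.
                  real (card (Vcirc (occupied g u n \<omega>) n))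
                    = 2 ^ n * (1 - real n powr (- 2 * cs + 1) * (1 + r n)))"
    if \<omega>: "\<omega> \<in> space M - N" for \<omega>
  proof -
    define r where "r n = (1 - real (card (Vcirc (occupied g u n \<omega>) n)) / 2 ^ n) / real n powr (-2*cs+1) - 1" for n
    have ev2: "eventually (\<lambda>n. n \<ge> 2) sequentially" by (rule eventually_ge_at_top)
    have eq: "\<forall>\<^sub>F n in sequentially. real (card (Vcirc (occupied g u n \<omega>) n))
                    = 2 ^ n * (1 - real n powr (- 2 * cs + 1) * (1 + r n))"
      using ev2
    proof (rule eventually_mono)
      fix n :: nat assume n: "n \<ge> 2"
      have "real n powr (-2*cs+1) > 0" using n by simp
      then show "real (card (Vcirc (occupied g u n \<omega>) n))
                    = 2 ^ n * (1 - real n powr (- 2 * cs + 1) * (1 + r n))"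
        unfolding r_def by (simp add: field_simps)
    qed
    have bnd: "\<forall>\<^sub>F n in sequentially. norm (r n) \<le> 2 * norm (real n powr (- (cs - 1)))"
      using eventually_conj[OF ev2 N[OF \<omega>]]
    proof (rule eventually_mono)
      fix n :: nat assume h: "n \<ge> 2 \<and> \<omega> \<in> space M - Bad n"
      then have n: "n \<ge> 2" and nb: "\<omega> \<notin> Bad n" and \<omega>s: "\<omega> \<in> space M" by auto
      have n1: "n \<ge> 1" using n by simp
      have P: "p n > 0" "p n \<le> 1" using p_small[OF n] by auto
      have h1: "\<bar>S n \<omega> - 2 ^ n * q n\<bar> \<le> 2 ^ n * (real n)^2 * p n ^ 3"
        using nb \<omega>s n E_S[OF n] by (auto simp: Bad_def aa_def)
      have h2: "\<bar>q n - real n * p n ^ 2\<bar> \<le> (real n)^2 * p n ^ 3 / 2"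
        unfolding q_def using q_approx[of "p n" n] P by simp
      have rb: "\<bar>(S n \<omega> / 2 ^ n) / (real n * p n ^ 2) - 1\<bar> \<le> 2 * (real n * p n)"
        by (rule r_bound[OF _ _ P(1) h1 h2]) (use n in auto)
      have "r n = (S n \<omega> / 2 ^ n) / (real n * p n ^ 2) - 1"
        unfolding r_def card_Vcirc powr_facts(1)[OF n1] by (simp add: field_simps)
      then show "norm (r n) \<le> 2 * norm (real n powr (- (cs - 1)))"
        using rb powr_facts(2)[OF n1] P by simp
    qed
    have "r \<in> O(\<lambda>n. real n powr (- (cs - 1)))" by (rule bigoI[OF bnd])
    then show ?thesis using eq by blast
  qed
  show ?thesis
    by (rule bexI[of _ "space M - N"]) (use meas1 good Ns in auto)
qed

lemma main1: "\<forall>\<beta>>0. \<forall>n\<ge>2. \<forall>\<omega>. \<forall>x\<in>Vcirc (occupied g u n \<omega>) n.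
            pi_circ \<beta> (Hn g u n \<omega>) (occupied g u n \<omega>) n x
              = 1 / real (card (Vcirc (occupied g u n \<omega>) n))"
proof (intro allI impI ballI)
  fix \<beta> :: real and n :: nat and \<omega> x
  assume n: "n \<ge> 2" and x: "x \<in> Vcirc (occupied g u n \<omega>) n"
  have hneg: "Hn g u n \<omega> y \<le> 0" if "occupied g u n \<omega> y" for y
  proof -
    have "g (n, y) \<omega> \<le> 0" using that u_pos[OF n] by (auto simp: occupied_def)
    then show ?thesis using that by (simp add: Hn_def mult_nonneg_nonpos)
  qed
  have hz: "Hn g u n \<omega> y = 0" if "\<not> occupied g u n \<omega> y" for y
    using that by (simp add: Hn_def)
  show "pi_circ \<beta> (Hn g u n \<omega>) (occupied g u n \<omega>) n x = 1 / real (card (Vcirc (occupied g u n \<omega>) n))"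
    by (rule pi_circ_uniform[OF _ hneg hz x]) (use n in auto)
qed

end

theorem proposition6p3:
  fixes M :: "'a measure" and g :: "nat \<times> int list \<Rightarrow> 'a \<Rightarrow> real"
    and u :: "nat \<Rightarrow> real" and cs :: real
  assumes "prob_space M"
    and "prob_space.indep_vars M (\<lambda>_. borel) g {(n, x). n \<ge> 1 \<and> x \<in> Vn n}"
    and "\<And>n x. n \<ge> 1 \<Longrightarrow> x \<in> Vn n \<Longrightarrow>
           distributed M lborel (g (n, x)) (\<lambda>t. ennreal (std_normal_density t))"
    and "\<And>n. n \<ge> 2 \<Longrightarrow>
           measure (density lborel (\<lambda>t. ennreal (std_normal_density t))) {.. - u n}
             = real n powr (- cs)"
    and "cs > 2"
  shows "(\<forall>\<beta>>0. \<forall>n\<ge>2. \<forall>\<omega>. \<forall>x\<in>Vcirc (occupied g u n \<omega>) n.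
            pi_circ \<beta> (Hn g u n \<omega>) (occupied g u n \<omega>) n x
              = 1 / real (card (Vcirc (occupied g u n \<omega>) n)))
       \<and> (\<exists>\<Omega>'\<in>sets M. measure M \<Omega>' = 1 \<and>
            (\<forall>\<omega>\<in>\<Omega>'. \<exists>r :: nat \<Rightarrow> real.
               r \<in> O(\<lambda>n. real n powr (- (cs - 1))) \<and>
               (\<forall>\<^sub>F n in sequentially.
                  real (card (Vcirc (occupied g u n \<omega>) n))
                    = 2 ^ n * (1 - real n powr (- 2 * cs + 1) * (1 + r n)))))"
proof -
  have "setting M g u cs" using assms by (simp add: setting_def setting_axioms_def)
  then interpret setting M g u cs .
  show ?thesis using main1 main2 by blast
qed


end
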